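(* Let $N\ge1$ and $k>0$ with $\#\mathcal O^\times\mid k$. If $D_K=4$, $D_K=8$, or $D_K\equiv3\pmod 4$ is prime, then $J^{\rm spez}_{k,1}(N)=J_{k,1}(N)$.
   Context: $K$ is an imaginary quadratic field of class number one with discriminant $-D_K$, ring of integers $\mathcal O$, $N(a)=a\bar a$, $\mathcal D^{-1}=\mathcal O/\sqrt{-D_K}$, $e[z]=e^{2\pi iz}$. $J_{k,1}(N)$ is the space of Hermitian Jacobi forms of weight $k$, index $1$ and level $N$: holomorphic $\varphi:\mathbf H\times\mathbf C^2\to\mathbf C$ such that (a) for all $\epsilon\in\mathcal O^\times$ and $\begin{pmatrix}a&b\\ c&d\end{pmatrix}\in\Gamma_0(N)$: $(c\tau+d)^{-k}e[-\frac{czw}{c\tau+d}]\varphi(\frac{a\tau+b}{c\tau+d},\frac{\epsilon z}{c\tau+d},\frac{\bar\epsilon w}{c\tau+d})=\varphi(\tau,z,w)$; (b) for all $\lambda,\mu\in\mathcal O$: $e[N(\lambda)\tau+\bar\lambda z+\lambda w]\varphi(\tau,z+\lambda\tau+\mu,w+\bar\lambda\tau+\bar\mu)=\varphi(\tau,z,w)$; (c) for each $M\in\mathrm{SL}_2(\mathbf Z)$ the transform of $\varphi$ by $M$ as in (a) (with $\epsilon=1$) has an expansion $\sum_{\ell\ge0,t\in\mathcal D^{-1},\nu N(t)\le\ell}c^M(\ell,t)e[\frac\ell\nu\tau+\bar tz+tw]$ with $\nu\in\mathbf Z_{>0}$, $\nu=1$ for $M=I_2$; $c_\varphi(\ell,t):=c^{I_2}(\ell,t)$.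 $J^{\rm spez}_{k,1}(N)$ is the subspace of $\varphi$ whose coefficients $c_\varphi(\ell,t)$ depend only on $\ell-N(t)$. *)

theory Defs
  imports "HOL-Analysis.Analysis"
begin

text \<open>The imaginary quadratic field K of discriminant -D (D = D_K > 0) is realised inside
  the complex numbers.\<close>

definition eC :: "complex \<Rightarrow> complex" where
  "eC x = exp (2 * of_real pi * \<i> * x)"

definition sqrtmD :: "nat \<Rightarrow> complex" where
  "sqrtmD D = \<i> * complex_of_real (sqrt (real D))"

definition omegaK :: "nat \<Rightarrow> complex" where
  "omegaK D = (- of_nat D + sqrtmD D) / 2"

definition OK :: "nat \<Rightarrow> complex set" where
  "OK D = {of_int x + of_int y * omegaK D | x y. True}"

definition Dinv :: "nat \<Rightarrow> complex set" where
  "Dinv D = {a / sqrtmD D | a. a \<in> OK D}"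

definition unitsK :: "nat \<Rightarrow> complex set" where
  "unitsK D = {e \<in> OK D. \<exists>f \<in> OK D. e * f = 1}"

definition Nm :: "complex \<Rightarrow> real" where
  "Nm a = Re (a * cnj a)"

definition holo3 :: "(complex \<Rightarrow> complex \<Rightarrow> complex \<Rightarrow> complex) \<Rightarrow> bool" where
  "holo3 \<phi> \<longleftrightarrow> (\<forall>\<tau> z w. Im \<tau> > 0 \<longrightarrow>
     (\<exists>\<alpha> \<beta> \<gamma>. ((\<lambda>(a, b, c). \<phi> a b c) has_derivative
        (\<lambda>(u, v, s). \<alpha> * u + \<beta> * v + \<gamma> * s)) (at (\<tau>, z, w))))"

text \<open>Transform of phi by M = (a b; c d) in SL_2(Z), weight k, index 1 (epsilon = 1).\<close>
definition slash :: "nat \<Rightarrow> (complex \<Rightarrow> complex \<Rightarrow> complex \<Rightarrow> complex)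
    \<Rightarrow> int \<Rightarrow> int \<Rightarrow> int \<Rightarrow> int \<Rightarrow> complex \<Rightarrow> complex \<Rightarrow> complex \<Rightarrow> complex" where
  "slash k \<phi> a b c d \<tau> z w =
     inverse ((of_int c * \<tau> + of_int d) ^ k)
     * eC (- (of_int c * z * w) / (of_int c * \<tau> + of_int d))
     * \<phi> ((of_int a * \<tau> + of_int b) / (of_int c * \<tau> + of_int d))
         (z / (of_int c * \<tau> + of_int d)) (w / (of_int c * \<tau> + of_int d))"

definition fourier_exp ::
    "nat \<Rightarrow> (complex \<Rightarrow> complex \<Rightarrow> complex \<Rightarrow> complex) \<Rightarrow> nat \<Rightarrow> (nat \<Rightarrow> complex \<Rightarrow> complex) \<Rightarrow> bool" where
  "fourier_exp D \<psi> \<nu> cf \<longleftrightarrow> (\<forall>\<tau> z w. Im \<tau> > 0 \<longrightarrow>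
     ((\<lambda>(l, t). cf l t * eC (of_nat l / of_nat \<nu> * \<tau> + cnj t * z + t * w)) has_sum \<psi> \<tau> z w)
       {(l, t). t \<in> Dinv D \<and> real \<nu> * Nm t \<le> real l})"

definition HJac :: "nat \<Rightarrow> nat \<Rightarrow> nat \<Rightarrow> (complex \<Rightarrow> complex \<Rightarrow> complex \<Rightarrow> complex) \<Rightarrow> bool" where
  "HJac D k N \<phi> \<longleftrightarrow>
     holo3 \<phi>
   \<and> (\<forall>\<epsilon> \<in> unitsK D. \<forall>a b c d :: int. a * d - b * c = 1 \<and> int N dvd c \<longrightarrow>
        (\<forall>\<tau> z w. Im \<tau> > 0 \<longrightarrow>
          inverse ((of_int c * \<tau> + of_int d) ^ k)
          * eC (- (of_int c * z * w) / (of_int c * \<tau> + of_int d))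
          * \<phi> ((of_int a * \<tau> + of_int b) / (of_int c * \<tau> + of_int d))
              (\<epsilon> * z / (of_int c * \<tau> + of_int d)) (cnj \<epsilon> * w / (of_int c * \<tau> + of_int d))
          = \<phi> \<tau> z w))
   \<and> (\<forall>lam \<in> OK D. \<forall>\<mu> \<in> OK D. \<forall>\<tau> z w. Im \<tau> > 0 \<longrightarrow>
        eC (of_real (Nm lam) * \<tau> + cnj lam * z + lam * w)
        * \<phi> \<tau> (z + lam * \<tau> + \<mu>) (w + cnj lam * \<tau> + cnj \<mu>) = \<phi> \<tau> z w)
   \<and> (\<forall>a b c d :: int. a * d - b * c = 1 \<longrightarrow>
        (\<exists>\<nu> > 0. (a = 1 \<and> b = 0 \<and> c = 0 \<and> d = 1 \<longrightarrow> \<nu> = 1) \<and>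
           (\<exists>cf. fourier_exp D (slash k \<phi> a b c d) \<nu> cf)))"

definition HJac_spez :: "nat \<Rightarrow> nat \<Rightarrow> nat \<Rightarrow> (complex \<Rightarrow> complex \<Rightarrow> complex \<Rightarrow> complex) \<Rightarrow> bool" where
  "HJac_spez D k N \<phi> \<longleftrightarrow> HJac D k N \<phi> \<and>
     (\<exists>cf. fourier_exp D \<phi> 1 cf \<and>
        (\<forall>l t l' t'. t \<in> Dinv D \<and> Nm t \<le> real l \<and> t' \<in> Dinv D \<and> Nm t' \<le> real l'
            \<and> real l - Nm t = real l' - Nm t' \<longrightarrow> cf l t = cf l' t'))"

end

theory Submission
  imports Defs
begin

definition dv :: "nat \<Rightarrow> int \<Rightarrow> int \<Rightarrow> complex" where
  "dv D m n = (of_int m + of_int n * omegaK D) / sqrtmD D"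
definition ok :: "nat \<Rightarrow> int \<Rightarrow> int \<Rightarrow> complex" where
  "ok D p q = of_int p + of_int q * omegaK D"

lemma sqrtmD_nz: "D > 0 \<Longrightarrow> sqrtmD D \<noteq> 0"
  by (simp add: sqrtmD_def)

lemma s2: "sqrtmD D * sqrtmD D = - of_nat D"
  by (simp add: sqrtmD_def complex_eq_iff)
lemma s2': "sqrtmD D * (sqrtmD D * x) = - of_nat D * x"
  by (simp add: mult.assoc[symmetric] s2)

lemma OK_iff: "x \<in> OK D \<longleftrightarrow> (\<exists>p q. x = ok D p q)"
  by (auto simp: OK_def ok_def)

lemma Dinv_iff: "t \<in> Dinv D \<longleftrightarrow> (\<exists>m n. t = dv D m n)"
  by (auto simp: Dinv_def OK_iff dv_def ok_def)

lemma omega_eq: "omegaK D = (- of_nat D + sqrtmD D) / 2"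
  by (simp add: omegaK_def)

lemma dv_add: "dv D m n + dv D m' n' = dv D (m+m') (n+n')"
  by (simp add: dv_def add_divide_distrib[symmetric] algebra_simps)

lemma dv_minus: "- dv D m n = dv D (-m) (-n)"
  by (simp add: dv_def minus_divide_left)

lemma ok_dv: "D > 0 \<Longrightarrow> 2 * E = D*(D+1) \<Longrightarrow> ok D p q = dv D (p * D - q * E) (2*p - q*D)"
proof -
  assume D: "D > 0" and E: "2 * E = D*(D+1)"
  have h: "(of_nat E::complex) = of_nat D * (of_nat D + 1) / 2"
    using arg_cong[OF E, of "of_nat :: nat \<Rightarrow> complex"] by (simp add: algebra_simps)
  show ?thesis using D sqrtmD_nz[OF D]
    unfolding dv_def ok_def omega_eq
    by (simp add: field_simps h algebra_simps s2 s2')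
qed

lemma cnj_s: "cnj (sqrtmD D) = - sqrtmD D"
  by (simp add: sqrtmD_def)
lemma cnj_omega: "cnj (omegaK D) = (- of_nat D - sqrtmD D) / 2"
  by (simp add: omega_eq cnj_s)

lemma cross: "D > 0 \<Longrightarrow> cnj (dv D m n) * ok D p q + dv D m n * cnj (ok D p q) = of_int (n*p - m*q)"
  using sqrtmD_nz[of D]
  unfolding dv_def ok_def
  by (simp add: cnj_s cnj_omega omega_eq field_simps algebra_simps s2 s2')

lemma evalpt: "D > 0 \<Longrightarrow> cnj (dv D m n) * (of_real s - of_real r * omegaK D) + dv D m n * cnj (of_real s - of_real r * omegaK D) = of_real (of_int m * r + of_int n * s)"
  using sqrtmD_nz[of D]
  unfolding dv_def
  by (simp add: cnj_s cnj_omega omega_eq field_simps algebra_simps s2 s2')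

lemma Nm_cnj: "complex_of_real (Nm a) = a * cnj a"
  by (simp add: Nm_def complex_eq_iff)

lemma Nm_ok: "4 * e = D*(D+1) \<Longrightarrow> Nm (ok D p q) = of_int (p^2 - int D*p*q + q^2 * int e)"
proof -
  assume E: "4 * e = D*(D+1)"
  have h: "(of_nat e::complex) = of_nat D * (of_nat D + 1) / 4"
    using arg_cong[OF E, of "of_nat :: nat \<Rightarrow> complex"] by (simp add: algebra_simps)
  have "complex_of_real (Nm (ok D p q)) = of_int (p^2 - int D*p*q + q^2 * int e)"
    unfolding Nm_cnj ok_def
    by (simp add: cnj_s cnj_omega omega_eq field_simps algebra_simps s2 s2' h power2_eq_square)
  then show ?thesis
    by (metis of_real_eq_iff of_real_of_int_eq)
qed

lemma Nm_dv: "D > 0 \<Longrightarrow> Nm (dv D m n) = Nm (ok D m n) / real D"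
proof -
  assume D: "D > 0"
  have "complex_of_real (Nm (dv D m n)) = complex_of_real (Nm (ok D m n) / real D)"
    using sqrtmD_nz[OF D] D unfolding Nm_cnj of_real_divide
    by (simp add: dv_def ok_def cnj_s field_simps s2 s2')
  then show ?thesis by (metis of_real_eq_iff)
qed

lemma dv_inj: "D > 0 \<Longrightarrow> dv D m n = dv D m' n' \<Longrightarrow> m = m' \<and> n = n'"
proof -
  assume D: "D > 0" and e: "dv D m n = dv D m' n'"
  have e2: "of_int m + of_int n * omegaK D = of_int m' + of_int n' * omegaK D"
    using e sqrtmD_nz[OF D] by (simp add: dv_def)
  have "Im (of_int m + of_int n * omegaK D) = of_int n * sqrt D / 2"
    by (simp add: omega_eq sqrtmD_def)
  moreover have "Im (of_int m' + of_int n' * omegaK D) = of_int n' * sqrt D / 2"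
    by (simp add: omega_eq sqrtmD_def)
  ultimately have "n = n'" using e2 D by simp
  then show ?thesis using e2 by simp
qed

lemma eC_add: "eC (a + b) = eC a * eC b"
  by (simp add: eC_def distrib_left exp_add)

lemma eC_int: "eC (of_int k) = 1"
  unfolding eC_def exp_eq_1 by (auto intro!: exI[of _ k])

lemma eC_real_eq_1: "eC (complex_of_real x) = 1 \<Longrightarrow> x \<in> \<int>"
proof -
  assume "eC (complex_of_real x) = 1"
  then obtain n :: int where "2 * pi * x = of_int (2*n) * pi"
    by (auto simp: eC_def exp_eq_1)
  then have "x = of_int n" by simp
  then show ?thesis by simp
qed

lemma eC_pow: "eC (of_nat j * a) = eC a ^ j"
proof -
  have "eC (of_nat j * a) = exp (of_nat j * (2 * of_real pi * \<i> * a))"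
    by (simp add: eC_def mult_ac)
  then show ?thesis by (simp add: exp_of_nat_mult eC_def)
qed

lemma geo: "M > 0 \<Longrightarrow> (\<Sum>j<M. eC (of_int k * of_nat j / of_nat M)) = (if int M dvd k then of_nat M else 0)"
proof (cases "int M dvd k")
  case True
  assume M: "M > 0"
  then obtain c where k: "k = int M * c" using True by blast
  have "eC (of_int k * of_nat j / of_nat M) = 1" for j
  proof -
    have "(of_int k * of_nat j / of_nat M :: complex) = of_int (c * int j)"
      using M by (simp add: k)
    then show ?thesis by (metis eC_int)
  qed
  then show ?thesis using True by simp
next
  case False
  assume M: "M > 0"
  define q where "q = eC (of_int k / of_nat M)"
  have qj: "eC (of_int k * of_nat j / of_nat M) = q ^ j" for j
    unfolding q_def eC_pow[symmetric] by (simp add: mult_ac)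
  have q1: "q \<noteq> 1"
  proof
    assume "q = 1"
    then have "eC (complex_of_real (of_int k / of_nat M)) = 1" by (simp add: q_def)
    then have "real_of_int k / real M \<in> \<int>" by (rule eC_real_eq_1)
    then obtain c where "real_of_int k / real M = of_int c" by (auto elim: Ints_cases)
    then have "k = int M * c" using M by (simp add: field_simps) (metis of_int_eq_iff of_int_mult of_int_of_nat_eq)
    then show False using False by simp
  qed
  have qM: "q ^ M = 1"
    using qj[of M] M by (simp add: eC_int)
  have "(\<Sum>j<M. eC (of_int k * of_nat j / of_nat M)) = (\<Sum>j<M. q ^ j)" by (simp add: qj)
  also have "\<dots> = 0" using geometric_sum[OF q1, of M] qM by simp
  finally show ?thesis using False by simp
qed

lemma has_sum_sum0:
  fixes f :: "'i \<Rightarrow> 'a \<Rightarrow> complex"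
  assumes "finite I" "\<And>i. i \<in> I \<Longrightarrow> (f i has_sum 0) A"
  shows "((\<lambda>x. \<Sum>i\<in>I. f i x) has_sum 0) A"
  using assms
proof (induction I rule: finite_induct)
  case empty then show ?case by simp
next
  case (insert i F)
  have "((\<lambda>x. f i x + (\<Sum>i\<in>F. f i x)) has_sum (0 + 0)) A"
    by (rule has_sum_add) (use insert in auto)
  then show ?case using insert by simp
qed

definition SS :: "nat \<Rightarrow> (nat \<times> complex) set" where
  "SS D = {p. snd p \<in> Dinv D \<and> Nm (snd p) \<le> real (fst p)}"
definition EE :: "nat \<times> complex \<Rightarrow> complex \<Rightarrow> complex \<Rightarrow> complex \<Rightarrow> complex" where
  "EE p \<tau> z w = eC (of_nat (fst p) * \<tau> + cnj (snd p) * z + snd p * w)"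
definition crd :: "nat \<Rightarrow> complex \<Rightarrow> int \<times> int" where
  "crd D t = (SOME c. t = dv D (fst c) (snd c))"

lemma crd: "t \<in> Dinv D \<Longrightarrow> t = dv D (fst (crd D t)) (snd (crd D t))"
proof -
  assume "t \<in> Dinv D"
  then obtain m n where "t = dv D m n" by (auto simp: Dinv_iff)
  then have "\<exists>c. t = dv D (fst c) (snd c)" by (intro exI[of _ "(m,n)"]) simp
  then show ?thesis unfolding crd_def by (rule someI_ex)
qed

lemma dvd_small: "int M dvd a \<Longrightarrow> \<bar>a\<bar> < int M \<Longrightarrow> a = 0"
proof (rule ccontr)
  assume "int M dvd a" "\<bar>a\<bar> < int M" "a \<noteq> 0"
  then have "\<bar>int M\<bar> \<le> \<bar>a\<bar>" using dvd_imp_le_int by blast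
  then show False using \<open>\<bar>a\<bar> < int M\<close> by simp
qed

lemma eC_i: "eC (of_nat l * \<i>) = complex_of_real (exp (- 2 * pi * real l))"
proof -
  have "2 * of_real pi * \<i> * (of_nat l * \<i>) = complex_of_real (- 2 * pi * real l)"
    by (simp add: complex_eq_iff)
  then show ?thesis by (simp only: eC_def exp_of_real)
qed

lemma core:
  assumes D: "D > 0"
    and H: "\<And>\<tau> z w. Im \<tau> > 0 \<Longrightarrow> ((\<lambda>p. d p * EE p \<tau> z w) has_sum 0) (SS D)"
    and p0: "p0 \<in> SS D"
  shows "d p0 = 0"
proof (rule ccontr)
  assume nz: "d p0 \<noteq> 0"
  define cm where "cm t = fst (crd D t)" for t
  define cn where "cn t = snd (crd D t)" for t
  define h where "h p = d p * complex_of_real (exp (- 2 * pi * real (fst p)))" for p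
  have tp: "snd p = dv D (cm (snd p)) (cn (snd p))" if "p \<in> SS D" for p
    using that crd by (auto simp: SS_def cm_def cn_def)
  have key: "((\<lambda>p. h p * eC (of_real (real (fst p) * x + of_int (cm (snd p)) * r + of_int (cn (snd p)) * s))) has_sum 0) (SS D)" for x r s
  proof -
    let ?z = "complex_of_real s - complex_of_real r * omegaK D"
    have 1: "((\<lambda>p. d p * EE p (of_real x + \<i>) ?z (cnj ?z)) has_sum 0) (SS D)"
      by (rule H) simp
    have 2: "d p * EE p (of_real x + \<i>) ?z (cnj ?z) = h p * eC (of_real (real (fst p) * x + of_int (cm (snd p)) * r + of_int (cn (snd p)) * s))" if "p \<in> SS D" for p
    proof -
      obtain mm nn where mn: "cm (snd p) = mm" "cn (snd p) = nn" by blast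
      have t: "snd p = dv D mm nn" using tp[OF that] mn by simp
      have ev: "cnj (snd p) * ?z + snd p * cnj ?z = of_real (of_int (cm (snd p)) * r + of_int (cn (snd p)) * s)"
        unfolding mn by (simp only: t) (rule evalpt[OF D])
      have "of_nat (fst p) * (of_real x + \<i>) + cnj (snd p) * ?z + snd p * cnj ?z
          = of_nat (fst p) * of_real x + (cnj (snd p) * ?z + snd p * cnj ?z) + of_nat (fst p) * \<i>"
        by (simp add: algebra_simps)
      also have "\<dots> = of_real (real (fst p) * x + of_int (cm (snd p)) * r + of_int (cn (snd p)) * s) + of_nat (fst p) * \<i>"
        unfolding ev by simp
      finally have ex: "of_nat (fst p) * (of_real x + \<i>) + cnj (snd p) * ?z + snd p * cnj ?z
          = of_real (real (fst p) * x + of_int (cm (snd p)) * r + of_int (cn (snd p)) * s) + of_nat (fst p) * \<i>" .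
      show ?thesis unfolding EE_def h_def ex eC_add eC_i by (simp add: mult_ac)
    qed
    show ?thesis
      apply (rule has_sum_cong[THEN iffD1, OF _ 1])
      using 2 by simp
  qed
  have h0: "(h has_sum 0) (SS D)"
    using key[of 0 0 0] by (simp add: eC_def)
  define nh where "nh p = norm (h p)" for p :: "nat \<times> complex"
  have nhs: "nh summable_on SS D"
    using h0 unfolding nh_def
    by (metis has_sum_imp_summable summable_on_iff_abs_summable_on_complex)
  define A where "A = infsum nh (SS D)"
  have hA: "(nh has_sum A) (SS D)" using nhs by (simp add: A_def)
  have nhpos: "nh p \<ge> 0" for p by (simp add: nh_def)
  define \<epsilon> where "\<epsilon> = norm (h p0) / 2"
  have hp0: "h p0 \<noteq> 0" using nz by (simp add: h_def)
  then have epos: "\<epsilon> > 0" by (simp add: \<epsilon>_def)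
  obtain F where F: "finite F" "F \<subseteq> SS D" "dist (sum nh F) A \<le> \<epsilon>"
    using has_sum_finite_approximation[OF hA epos] by blast
  define F' where "F' = insert p0 F"
  have F': "finite F'" "F' \<subseteq> SS D" "p0 \<in> F'" using F p0 by (auto simp: F'_def)
  have tail: "(nh has_sum (A - sum nh F')) (SS D - F')"
    by (rule has_sum_Diff[OF hA has_sum_finite[OF F'(1)] F'(2)])
  have "sum nh F \<le> sum nh F'"
    unfolding F'_def by (rule sum_mono2) (use F nhpos in auto)
  then have tailsmall: "A - sum nh F' \<le> \<epsilon>"
    using F(3) by (simp add: dist_real_def abs_le_iff)
  define l0 where "l0 = int (fst p0)"
  define m0 where "m0 = cm (snd p0)"
  define n0 where "n0 = cn (snd p0)"
  define dl where "dl p = int (fst p) - l0" for p :: "nat \<times> complex"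
  define dm where "dm p = cm (snd p) - m0" for p :: "nat \<times> complex"
  define dn where "dn p = cn (snd p) - n0" for p :: "nat \<times> complex"
  define M where "M = nat (1 + (\<Sum>p\<in>F'. \<bar>dl p\<bar> + \<bar>dm p\<bar> + \<bar>dn p\<bar>))"
  have Msum: "\<bar>dl p\<bar> + \<bar>dm p\<bar> + \<bar>dn p\<bar> \<le> (\<Sum>p\<in>F'. \<bar>dl p\<bar> + \<bar>dm p\<bar> + \<bar>dn p\<bar>)" if "p \<in> F'" for p
    by (rule member_le_sum) (use that F' in auto)
  have sum_nn: "0 \<le> (\<Sum>p\<in>F'. \<bar>dl p\<bar> + \<bar>dm p\<bar> + \<bar>dn p\<bar>)"
    by (rule sum_nonneg) auto
  have Mpos: "M > 0" using sum_nn by (simp add: M_def)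
  have Mbig: "\<bar>dl p\<bar> < int M \<and> \<bar>dm p\<bar> < int M \<and> \<bar>dn p\<bar> < int M" if "p \<in> F'" for p
  proof -
    have "int M = 1 + (\<Sum>p\<in>F'. \<bar>dl p\<bar> + \<bar>dm p\<bar> + \<bar>dn p\<bar>)" using sum_nn by (simp add: M_def)
    then show ?thesis using Msum[OF that] abs_ge_zero[of "dl p"] abs_ge_zero[of "dm p"] abs_ge_zero[of "dn p"] by linarith
  qed
  define ind where "ind p = (if int M dvd dl p \<and> int M dvd dm p \<and> int M dvd dn p then 1 else (0::complex))" for p :: "nat \<times> complex"
  have avg: "((\<lambda>p. h p * ind p) has_sum 0) (SS D)"
  proof -
    define A where "A j1 j2 j3 = (of_int l0 * real j1 + of_int m0 * real j2 + of_int n0 * real j3) / real M" for j1 j2 j3 :: nat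
    define B where "B j1 j2 j3 p = real (fst p) * (real j1 / real M) + of_int (cm (snd p)) * (real j2 / real M) + of_int (cn (snd p)) * (real j3 / real M)" for j1 j2 j3 :: nat and p :: "nat \<times> complex"
    define X where "X j1 j2 j3 p = eC (- of_real (A j1 j2 j3)) * (h p * eC (of_real (B j1 j2 j3 p)))" for j1 j2 j3 :: nat and p :: "nat \<times> complex"
    have k2: "((\<lambda>p. c * (h p * eC (of_real (real (fst p) * x + of_int (cm (snd p)) * r + of_int (cn (snd p)) * s)))) has_sum 0) (SS D)" for c x r s
      using has_sum_cmult_right[OF key, of c] by simp
    have 1: "((\<lambda>p. \<Sum>j1<M. \<Sum>j2<M. \<Sum>j3<M. X j1 j2 j3 p) has_sum 0) (SS D)"
      unfolding X_def B_def by (intro has_sum_sum0 finite_lessThan k2)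
    define E where "E k j = eC (of_int k * of_nat j / of_nat M)" for k :: int and j :: nat
    have e: "X j1 j2 j3 p = h p * (E (dl p) j1 * E (dm p) j2 * E (dn p) j3)" for j1 j2 j3 p
    proof -
      have ex: "- complex_of_real (A j1 j2 j3) + complex_of_real (B j1 j2 j3 p)
          = of_int (dl p) * of_nat j1 / of_nat M + of_int (dm p) * of_nat j2 / of_nat M + of_int (dn p) * of_nat j3 / of_nat M"
        using Mpos by (simp add: A_def B_def dl_def dm_def dn_def field_simps)
      have "X j1 j2 j3 p = h p * eC (- complex_of_real (A j1 j2 j3) + complex_of_real (B j1 j2 j3 p))"
        unfolding X_def eC_add by (simp add: mult_ac)
      also have "\<dots> = h p * (E (dl p) j1 * E (dm p) j2 * E (dn p) j3)"
        unfolding ex eC_add E_def by simp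
      finally show ?thesis .
    qed
    have 2: "(\<Sum>j1<M. \<Sum>j2<M. \<Sum>j3<M. X j1 j2 j3 p) = h p * (of_nat M ^ 3 * ind p)" for p
    proof -
      have "(\<Sum>j1<M. \<Sum>j2<M. \<Sum>j3<M. X j1 j2 j3 p)
          = h p * ((\<Sum>j1<M. E (dl p) j1) * ((\<Sum>j2<M. E (dm p) j2) * (\<Sum>j3<M. E (dn p) j3)))"
        unfolding e by (simp only: sum_product, simp only: sum_distrib_left mult.assoc)
      also have "\<dots> = h p * (of_nat M ^ 3 * ind p)"
        unfolding E_def geo[OF Mpos] by (simp add: ind_def power3_eq_cube)
      finally show ?thesis .
    qed
    have 3: "((\<lambda>p. inverse (of_nat M ^ 3) * (h p * (of_nat M ^ 3 * ind p))) has_sum 0) (SS D)"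
      using has_sum_cmult_right[OF 1[unfolded 2], of "inverse (of_nat M ^ 3)"] by simp
    show ?thesis
      apply (rule has_sum_cong[THEN iffD1, OF _ 3])
      using Mpos by (simp add: field_simps)
  qed
  define g where "g p = h p * ind p" for p :: "nat \<times> complex"
  have gF: "sum g F' = h p0"
  proof -
    have "g p = 0" if "p \<in> F' - {p0}" for p
    proof (rule ccontr)
      assume "g p \<noteq> 0"
      then have dv3: "int M dvd dl p" "int M dvd dm p" "int M dvd dn p"
        by (auto simp: g_def ind_def split: if_splits)
      have pF: "p \<in> F'" using that by simp
      have z: "dl p = 0" "dm p = 0" "dn p = 0"
        using dvd_small[OF dv3(1)] dvd_small[OF dv3(2)] dvd_small[OF dv3(3)] Mbig[OF pF] by auto
      have "snd p = dv D m0 n0" using tp[of p] pF F' z by (auto simp: dm_def dn_def)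
      moreover have "snd p0 = dv D m0 n0" using tp[OF p0] by (simp add: m0_def n0_def)
      moreover have "fst p = fst p0" using z by (simp add: dl_def l0_def)
      ultimately have "p = p0" by (simp add: prod_eq_iff)
      then show False using that by simp
    qed
    then have "sum g (F' - {p0}) = 0" by (simp add: sum.neutral)
    moreover have "g p0 = h p0" by (simp add: g_def ind_def dl_def dm_def dn_def l0_def m0_def n0_def)
    ultimately show ?thesis using sum.remove[OF F'(1) F'(3), of g] by simp
  qed
  have gt: "(g has_sum (0 - h p0)) (SS D - F')"
    using has_sum_Diff[OF avg[folded g_def] has_sum_finite[OF F'(1)] F'(2)] gF by simp
  have nhsub: "nh summable_on (SS D - F')" using tail by (rule has_sum_imp_summable)
  have gle: "norm (g p) \<le> nh p" for p
    by (simp add: g_def ind_def nh_def)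
  have gabs: "(\<lambda>p. norm (g p)) summable_on (SS D - F')"
    by (rule Infinite_Sum.abs_summable_on_comparison_test[OF nhsub[unfolded nh_def]]) (use gle in \<open>simp add: nh_def\<close>)
  have "norm (h p0) = norm (infsum g (SS D - F'))"
    using gt by (simp add: infsumI)
  also have "\<dots> \<le> infsum (\<lambda>p. norm (g p)) (SS D - F')"
    by (rule norm_infsum_bound[OF gabs])
  also have "\<dots> \<le> infsum nh (SS D - F')"
    by (rule infsum_mono[OF gabs nhsub]) (rule gle)
  also have "\<dots> = A - sum nh F'" using tail by (simp add: infsumI)
  also have "\<dots> \<le> \<epsilon>" by (rule tailsmall)
  finally have "norm (h p0) \<le> norm (h p0) / 2" by (simp add: \<epsilon>_def)
  then show False using hp0 by simp
qed

lemma rel: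
  assumes D: "D > 0"
    and FE: "\<And>\<tau> z w. Im \<tau> > 0 \<Longrightarrow> ((\<lambda>p. cf p * EE p \<tau> z w) has_sum \<phi> \<tau> z w) (SS D)"
    and G: "\<And>\<tau> z w. Im \<tau> > 0 \<Longrightarrow> ((\<lambda>p. cf p * EE (g p) \<tau> z w) has_sum \<phi> \<tau> z w) (SS D)"
    and gi1: "\<And>p. p \<in> SS D \<Longrightarrow> gi (g p) = p" and g1: "\<And>p. p \<in> SS D \<Longrightarrow> g p \<in> SS D"
    and gi2: "\<And>q. q \<in> SS D \<Longrightarrow> g (gi q) = q" and g2: "\<And>q. q \<in> SS D \<Longrightarrow> gi q \<in> SS D"
    and p: "p \<in> SS D"
  shows "cf (g p) = cf p"
proof -
  have R: "((\<lambda>q. cf (gi q) * EE q \<tau> z w) has_sum \<phi> \<tau> z w) (SS D)" if "Im \<tau> > 0" for \<tau> z w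
  proof -
    have "((\<lambda>p. cf (gi (g p)) * EE (g p) \<tau> z w) has_sum \<phi> \<tau> z w) (SS D)"
      apply (rule has_sum_cong[THEN iffD1, OF _ G[OF that]]) using gi1 by simp
    moreover have "((\<lambda>p. cf (gi (g p)) * EE (g p) \<tau> z w) has_sum \<phi> \<tau> z w) (SS D)
        = ((\<lambda>q. cf (gi q) * EE q \<tau> z w) has_sum \<phi> \<tau> z w) (SS D)"
      by (rule has_sum_reindex_bij_witness[where i=gi and j=g]) (use gi1 g1 gi2 g2 in auto)
    ultimately show ?thesis by simp
  qed
  have Z: "((\<lambda>q. (cf (gi q) - cf q) * EE q \<tau> z w) has_sum 0) (SS D)" if "Im \<tau> > 0" for \<tau> z w
  proof -
    have "((\<lambda>q. cf (gi q) * EE q \<tau> z w + - (cf q * EE q \<tau> z w)) has_sum (\<phi> \<tau> z w + - \<phi> \<tau> z w)) (SS D)"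
      by (rule has_sum_add[OF R[OF that]]) (simp add: has_sum_uminus FE[OF that])
    then show ?thesis by (simp add: algebra_simps)
  qed
  have "cf (gi (g p)) - cf (g p) = 0"
    by (rule core[OF D Z g1[OF p]])
  then show ?thesis using gi1[OF p] by simp
qed

lemma Nm_nonneg: "Nm a \<ge> 0"
  by (simp add: Nm_def)

lemma Nm_minus: "Nm (- a) = Nm a"
  by (simp add: Nm_def)

lemma Nm_i: "Nm (\<i> * a) = Nm a"
  by (simp add: Nm_def)

lemma Dinv_minus: "t \<in> Dinv D \<Longrightarrow> - t \<in> Dinv D"
  by (metis Dinv_iff dv_minus)

lemma OK_minus: "x \<in> OK D \<Longrightarrow> - x \<in> OK D"
proof -
  assume "x \<in> OK D"
  then obtain p q where "x = ok D p q" by (auto simp: OK_iff)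
  then have "- x = ok D (-p) (-q)" by (simp add: ok_def)
  then show ?thesis by (auto simp: OK_iff)
qed

lemma ok_dv_OK: "D > 0 \<Longrightarrow> 2 * E = D*(D+1) \<Longrightarrow> a = p * int D - q * int E \<Longrightarrow> b = 2*p - q * int D \<Longrightarrow> dv D a b \<in> OK D"
proof -
  assume "D > 0" "2 * E = D*(D+1)" "a = p * int D - q * int E" "b = 2*p - q * int D"
  then have "dv D a b = ok D p q" using ok_dv[of D E p q] by simp
  then show ?thesis by (auto simp: OK_iff)
qed

lemma Dinv_add: "D > 0 \<Longrightarrow> t \<in> Dinv D \<Longrightarrow> x \<in> OK D \<Longrightarrow> t + x \<in> Dinv D"
proof -
  assume D: "D > 0" and t: "t \<in> Dinv D" and x: "x \<in> OK D"
  obtain m n where tm: "t = dv D m n" using t by (auto simp: Dinv_iff)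
  obtain p q where xp: "x = ok D p q" using x by (auto simp: OK_iff)
  have E: "2 * (D*(D+1) div 2) = D*(D+1)" by simp
  show ?thesis unfolding tm xp ok_dv[OF D E] dv_add Dinv_iff by blast
qed

lemma Nm_int: "D > 0 \<Longrightarrow> 4 dvd D*(D+1) \<Longrightarrow> t \<in> Dinv D \<Longrightarrow> x \<in> OK D \<Longrightarrow> Nm (t + x) - Nm t \<in> \<int>"
proof -
  assume D: "D > 0" and 4: "4 dvd D*(D+1)" and t: "t \<in> Dinv D" and x: "x \<in> OK D"
  obtain m n where tm: "t = dv D m n" using t by (auto simp: Dinv_iff)
  obtain p q where xp: "x = ok D p q" using x by (auto simp: OK_iff)
  obtain e where e: "D*(D+1) = 4 * e" using 4 by blast
  have "complex_of_real (Nm (t + x) - Nm t) = (cnj t * x + t * cnj x) + complex_of_real (Nm x)"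
    unfolding of_real_diff Nm_cnj by (simp add: algebra_simps)
  also have "\<dots> = of_int (n*p - m*q) + of_int (p^2 - int D*p*q + q^2 * int e)"
    unfolding tm xp cross[OF D] Nm_ok[OF e[symmetric]] by simp
  finally have "complex_of_real (Nm (t + x) - Nm t) = complex_of_real (of_int (n*p - m*q + (p^2 - int D*p*q + q^2 * int e)))"
    by simp
  then have "Nm (t + x) - Nm t = of_int (n*p - m*q + (p^2 - int D*p*q + q^2 * int e))"
    by (simp only: of_real_eq_iff)
  then show ?thesis by simp
qed


lemma nat_floor_real: "y \<in> \<int> \<Longrightarrow> y \<ge> 0 \<Longrightarrow> real (nat \<lfloor>y\<rfloor>) = y"
  by (metis Ints_cases floor_of_int of_int_0_le_iff of_int_of_nat_eq nat_0_le)

lemma Nm_unit: "\<epsilon> * cnj \<epsilon> = 1 \<Longrightarrow> Nm (cnj \<epsilon> * t) = Nm t"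
proof -
  assume e: "\<epsilon> * cnj \<epsilon> = 1"
  have "complex_of_real (Nm (cnj \<epsilon> * t)) = (\<epsilon> * cnj \<epsilon>) * (t * cnj t)"
    unfolding Nm_cnj by (simp add: mult_ac)
  also have "\<dots> = complex_of_real (Nm t)" using e by (simp add: Nm_cnj)
  finally show ?thesis by (simp only: of_real_eq_iff)
qed

lemma unit_rel:
  assumes D: "D > 0"
    and FE: "\<And>\<tau> z w. Im \<tau> > 0 \<Longrightarrow> ((\<lambda>p. cf p * EE p \<tau> z w) has_sum \<phi> \<tau> z w) (SS D)"
    and UE: "\<And>\<tau> z w. Im \<tau> > 0 \<Longrightarrow> \<phi> \<tau> (\<epsilon> * z) (cnj \<epsilon> * w) = \<phi> \<tau> z w"
    and e1: "\<epsilon> * cnj \<epsilon> = 1"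
    and MEM: "\<And>t. t \<in> Dinv D \<Longrightarrow> cnj \<epsilon> * t \<in> Dinv D \<and> \<epsilon> * t \<in> Dinv D"
    and p: "p \<in> SS D"
  shows "cf (fst p, cnj \<epsilon> * snd p) = cf p"
proof -
  have e2: "cnj \<epsilon> * \<epsilon> = 1" using e1 by (simp add: mult.commute)
  have Nm2: "Nm (\<epsilon> * t) = Nm t" for t
    using Nm_unit[of "cnj \<epsilon>" t] e2 by simp
  show ?thesis
  proof (rule rel[OF D FE, where g = "\<lambda>p. (fst p, cnj \<epsilon> * snd p)" and gi = "\<lambda>p. (fst p, \<epsilon> * snd p)"])
    fix \<tau> z w :: complex assume t: "Im \<tau> > 0"
    have "((\<lambda>p. cf p * EE p \<tau> (\<epsilon> * z) (cnj \<epsilon> * w)) has_sum \<phi> \<tau> z w) (SS D)"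
      using FE[OF t, of "\<epsilon> * z" "cnj \<epsilon> * w"] UE[OF t] by simp
    then show "((\<lambda>p. cf p * EE (fst p, cnj \<epsilon> * snd p) \<tau> z w) has_sum \<phi> \<tau> z w) (SS D)"
      by (simp add: EE_def mult_ac)
  next
    fix p assume "p \<in> SS D"
    then show "(fst (fst p, cnj \<epsilon> * snd p), \<epsilon> * snd (fst p, cnj \<epsilon> * snd p)) = p"
      using e1 by (simp add: mult.assoc[symmetric])
  next
    fix p assume "p \<in> SS D"
    then show "(fst p, cnj \<epsilon> * snd p) \<in> SS D"
      using MEM Nm_unit[OF e1] by (auto simp: SS_def)
  next
    fix p assume "p \<in> SS D"
    then show "(fst (fst p, \<epsilon> * snd p), cnj \<epsilon> * snd (fst p, \<epsilon> * snd p)) = p"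
      using e2 by (simp add: mult.assoc[symmetric])
  next
    fix p assume "p \<in> SS D"
    then show "(fst p, \<epsilon> * snd p) \<in> SS D"
      using MEM Nm2 by (auto simp: SS_def)
  qed (use p in auto)
qed

lemma trans_rel:
  assumes D: "D > 0" and D4: "4 dvd D*(D+1)"
    and FE: "\<And>\<tau> z w. Im \<tau> > 0 \<Longrightarrow> ((\<lambda>p. cf p * EE p \<tau> z w) has_sum \<phi> \<tau> z w) (SS D)"
    and TR: "\<And>\<tau> z w. Im \<tau> > 0 \<Longrightarrow> eC (of_real (Nm x) * \<tau> + cnj x * z + x * w) * \<phi> \<tau> (z + x * \<tau>) (w + cnj x * \<tau>) = \<phi> \<tau> z w"
    and x: "x \<in> OK D"
    and p: "p \<in> SS D"
  shows "cf (nat \<lfloor>real (fst p) + (Nm (snd p + x) - Nm (snd p))\<rfloor>, snd p + x) = cf p"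
proof -
  have mx: "- x \<in> OK D" using x by (rule OK_minus)
  define g where "g p = (nat \<lfloor>real (fst p) + (Nm (snd p + x) - Nm (snd p))\<rfloor>, snd p + x)" for p :: "nat \<times> complex"
  define gi where "gi p = (nat \<lfloor>real (fst p) + (Nm (snd p - x) - Nm (snd p))\<rfloor>, snd p - x)" for p :: "nat \<times> complex"
  have gfst: "real (fst (g p)) = real (fst p) + (Nm (snd p + x) - Nm (snd p))" and gS: "g p \<in> SS D" if "p \<in> SS D" for p
  proof -
    have t: "snd p \<in> Dinv D" and l: "Nm (snd p) \<le> real (fst p)" using that by (auto simp: SS_def)
    have I: "Nm (snd p + x) - Nm (snd p) \<in> \<int>" by (rule Nm_int[OF D D4 t x])
    have "real (fst p) + (Nm (snd p + x) - Nm (snd p)) \<ge> Nm (snd p + x)" using l by simp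
    moreover have "Nm (snd p + x) \<ge> 0" by (rule Nm_nonneg)
    moreover have "real (fst p) + (Nm (snd p + x) - Nm (snd p)) \<in> \<int>" using I by (intro Ints_add) auto
    ultimately show r: "real (fst (g p)) = real (fst p) + (Nm (snd p + x) - Nm (snd p))"
      unfolding g_def fst_conv by (intro nat_floor_real) auto
    show "g p \<in> SS D" using Dinv_add[OF D t x] r l by (simp add: SS_def g_def)
  qed
  have gifst: "real (fst (gi p)) = real (fst p) + (Nm (snd p - x) - Nm (snd p))" and giS: "gi p \<in> SS D" if "p \<in> SS D" for p
  proof -
    have t: "snd p \<in> Dinv D" and l: "Nm (snd p) \<le> real (fst p)" using that by (auto simp: SS_def)
    have I: "Nm (snd p - x) - Nm (snd p) \<in> \<int>" using Nm_int[OF D D4 t mx] by simp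
    have "real (fst p) + (Nm (snd p - x) - Nm (snd p)) \<ge> Nm (snd p - x)" using l by simp
    moreover have "Nm (snd p - x) \<ge> 0" by (rule Nm_nonneg)
    moreover have "real (fst p) + (Nm (snd p - x) - Nm (snd p)) \<in> \<int>" using I by (intro Ints_add) auto
    ultimately show r: "real (fst (gi p)) = real (fst p) + (Nm (snd p - x) - Nm (snd p))"
      unfolding gi_def fst_conv by (intro nat_floor_real) auto
    show "gi p \<in> SS D" using Dinv_add[OF D t mx] r l by (simp add: SS_def gi_def)
  qed
  show ?thesis unfolding g_def[symmetric]
  proof (rule rel[OF D FE, where gi = gi])
    fix \<tau> z w :: complex assume t: "Im \<tau> > 0"
    let ?c = "eC (of_real (Nm x) * \<tau> + cnj x * z + x * w)"
    have h: "((\<lambda>p. ?c * (cf p * EE p \<tau> (z + x * \<tau>) (w + cnj x * \<tau>))) has_sum ?c * \<phi> \<tau> (z + x * \<tau>) (w + cnj x * \<tau>)) (SS D)"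
      by (rule has_sum_cmult_right[OF FE[OF t]])
    show "((\<lambda>p. cf p * EE (g p) \<tau> z w) has_sum \<phi> \<tau> z w) (SS D)"
    proof (rule has_sum_cong[THEN iffD1, OF _ h[unfolded TR[OF t]]])
      fix p assume pS: "p \<in> SS D"
      have e1: "(of_nat (fst (g p)) :: complex) = of_nat (fst p) + ((snd p + x) * cnj (snd p + x) - snd p * cnj (snd p))"
      proof -
        have "(of_nat (fst (g p)) :: complex) = of_real (real (fst (g p)))" by simp
        also have "\<dots> = of_nat (fst p) + ((snd p + x) * cnj (snd p + x) - snd p * cnj (snd p))"
          unfolding gfst[OF pS] of_real_add of_real_diff Nm_cnj by simp
        finally show ?thesis .
      qed
      have "of_nat (fst (g p)) * \<tau> + cnj (snd (g p)) * z + snd (g p) * w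
          = (of_nat (fst p) * \<tau> + cnj (snd p) * (z + x * \<tau>) + snd p * (w + cnj x * \<tau>))
            + (of_real (Nm x) * \<tau> + cnj x * z + x * w)"
        unfolding e1 Nm_cnj by (simp add: g_def algebra_simps)
      then show "?c * (cf p * EE p \<tau> (z + x * \<tau>) (w + cnj x * \<tau>)) = cf p * EE (g p) \<tau> z w"
        unfolding EE_def by (simp add: eC_add mult_ac)
    qed
  next
    fix p assume pS: "p \<in> SS D"
    have "real (fst (gi (g p))) = real (fst p)"
      using gifst[OF gS[OF pS]] gfst[OF pS] by (simp add: g_def)
    then show "gi (g p) = p" by (simp add: gi_def g_def prod_eq_iff)
  next
    fix p assume "p \<in> SS D" then show "g p \<in> SS D" by (rule gS)
  next
    fix p assume pS: "p \<in> SS D"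
    have "real (fst (g (gi p))) = real (fst p)"
      using gfst[OF giS[OF pS]] gifst[OF pS] by (simp add: gi_def)
    then show "g (gi p) = p" by (simp add: gi_def g_def prod_eq_iff)
  next
    fix p assume "p \<in> SS D" then show "gi p \<in> SS D" by (rule giS)
  qed (use p in auto)
qed

lemma sq8: "((x::int)^2) mod 8 = (if odd x then 1 else if 4 dvd x then 0 else 4)"
proof -
  have a: "x^2 mod 8 = ((x mod 8)^2) mod 8" by (simp add: power_mod)
  have b: "odd x \<longleftrightarrow> odd (x mod 8)" "4 dvd x \<longleftrightarrow> 4 dvd (x mod 8)" by presburger+
  have "x mod 8 = 0 \<or> x mod 8 = 1 \<or> x mod 8 = 2 \<or> x mod 8 = 3 \<or> x mod 8 = 4 \<or> x mod 8 = 5 \<or> x mod 8 = 6 \<or> x mod 8 = 7"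
    by presburger
  then show ?thesis unfolding a b by (elim disjE) simp_all
qed

definition QQ :: "nat \<Rightarrow> nat \<Rightarrow> int \<Rightarrow> int \<Rightarrow> int" where
  "QQ D e m n = m^2 - int D * m * n + n^2 * int e"

lemma coords_diff:
  assumes D: "D > 0" and e: "4 * e = D*(D+1)"
    and I: "Nm (dv D m' n') - Nm (dv D m n) \<in> \<int>"
  shows "int D dvd (QQ D e m' n' - QQ D e m n)"
proof -
  have "Nm (dv D m' n') - Nm (dv D m n) = of_int (QQ D e m' n' - QQ D e m n) / real D"
    unfolding Nm_dv[OF D] Nm_ok[OF e] QQ_def by (simp add: diff_divide_distrib)
  moreover obtain z where "Nm (dv D m' n') - Nm (dv D m n) = of_int z" using I by (auto elim: Ints_cases)
  ultimately have "real_of_int (QQ D e m' n' - QQ D e m n) = of_int (int D * z)" using D by (simp add: field_simps)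
  then have "QQ D e m' n' - QQ D e m n = int D * z" by (simp only: of_int_eq_iff)
  then show ?thesis by simp
qed

lemma dv_diff: "dv D m' n' - dv D m n = dv D (m' - m) (n' - n)"
proof -
  have "dv D m' n' - dv D m n = dv D m' n' + (- dv D m n)" by simp
  also have "\<dots> = dv D (m' - m) (n' - n)" unfolding dv_minus dv_add by simp
  finally show ?thesis .
qed

lemma dv_sum: "dv D m' n' - (- dv D m n) = dv D (m' + m) (n' + n)"
  using dv_add[of D m' n' m n] by simp

lemma i_dv4: "\<i> * dv 4 m n = dv 4 (2*m - 5*n) (m - 2*n)"
  unfolding dv_def omegaK_def sqrtmD_def
  by (simp add: field_simps complex_eq_iff)

lemma target_odd:
  assumes P: "prime D" and D3: "D mod 4 = 3"
    and t: "t \<in> Dinv D" and t': "t' \<in> Dinv D" and I: "Nm t' - Nm t \<in> \<int>"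
  shows "t' - t \<in> OK D \<or> t' - (- t) \<in> OK D"
proof -
  have D: "D > 0" using P by (simp add: prime_gt_0_nat)
  have "4 dvd D + 1" using D3 by presburger
  then obtain f where f: "D + 1 = 4 * f" by blast
  define e where "e = D * f"
  have e: "4 * e = D*(D+1)" unfolding e_def f by simp
  have E2: "2 * (2*D*f) = D*(D+1)" unfolding f by simp
  have fi: "int D + 1 = 4 * int f" using f by linarith
  have memb: "dv D a b \<in> OK D" if ad: "int D dvd a" for a b
  proof -
    obtain k where k: "a = int D * k" using ad by blast
    show ?thesis
    proof (rule ok_dv_OK[OF D E2, of a "k + (b - 2*k) * (2*int f)" "b - 2*k" b])
      show "a = (k + (b - 2 * k) * (2 * int f)) * int D - (b - 2 * k) * int (2 * D * f)"
        unfolding k by (simp add: algebra_simps)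
      have "2 * (k + (b - 2 * k) * (2 * int f)) - (b - 2 * k) * int D = 2*k + (b - 2*k) * (4 * int f - int D)"
        by (simp add: algebra_simps)
      also have "\<dots> = b" unfolding fi[symmetric] by simp
      finally show "b = 2 * (k + (b - 2 * k) * (2 * int f)) - (b - 2 * k) * int D" by simp
    qed
  qed
  obtain m n where tm: "t = dv D m n" using t by (auto simp: Dinv_iff)
  obtain m' n' where tm': "t' = dv D m' n'" using t' by (auto simp: Dinv_iff)
  have dq: "int D dvd QQ D e m' n' - QQ D e m n"
    using coords_diff[OF D e] I unfolding tm tm' by blast
  have "QQ D e m' n' - QQ D e m n = (m' - m)*(m' + m) + int D * (- (m'*n') + m*n + int f * (n'^2 - n^2))"
    by (simp add: QQ_def e_def algebra_simps power2_eq_square)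
  with dq have "int D dvd (m' - m)*(m' + m)"
    by (metis dvd_add_right_iff dvd_triv_left add.commute)
  moreover have "prime (int D)" using P by simp
  ultimately have "int D dvd (m' - m) \<or> int D dvd (m' + m)"
    by (simp add: prime_dvd_mult_iff)
  then show ?thesis
    unfolding tm tm' dv_diff dv_sum using memb by blast
qed


lemma par4:
  fixes m n m' n' A B A' B' :: int
  assumes a1: "A mod 8 = (if odd m then 1 else if 4 dvd m then 0 else 4)"
    and a2: "B mod 8 = (if odd n then 1 else if 4 dvd n then 0 else 4)"
    and a3: "A' mod 8 = (if odd m' then 1 else if 4 dvd m' then 0 else 4)"
    and a4: "B' mod 8 = (if odd n' then 1 else if 4 dvd n' then 0 else 4)"
    and d: "4 dvd (A' + B') - (A + B)"
  shows "(2 dvd m' - m \<and> 2 dvd n' - n) \<or> (2 dvd m' - (2*m - 5*n) \<and> 2 dvd n' - (m - 2*n))"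
proof -
  have r: "4 dvd (A' mod 8 + B' mod 8 - A mod 8 - B mod 8)" using d by presburger
  have c: "(odd m \<and> odd n) = (odd m' \<and> odd n')" "(odd m \<or> odd n) = (odd m' \<or> odd n')"
    using r unfolding a1 a2 a3 a4 by (auto split: if_splits)
  then show ?thesis by presburger
qed

lemma par8:
  fixes m n m' n' A B A' B' :: int
  assumes a1: "A mod 8 = (if odd m then 1 else if 4 dvd m then 0 else 4)"
    and a2: "B mod 8 = (if odd n then 1 else if 4 dvd n then 0 else 4)"
    and a3: "A' mod 8 = (if odd m' then 1 else if 4 dvd m' then 0 else 4)"
    and a4: "B' mod 8 = (if odd n' then 1 else if 4 dvd n' then 0 else 4)"
    and d: "8 dvd (A' + 2*B') - (A + 2*B)"
  shows "(4 dvd m' - m \<and> 2 dvd n' - n) \<or> (4 dvd m' + m \<and> 2 dvd n' + n)"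
proof -
  have r: "8 dvd (A' mod 8 + 2 * (B' mod 8) - A mod 8 - 2 * (B mod 8))" using d by presburger
  have c: "odd m = odd m'" "odd n = odd n'" "even m \<Longrightarrow> (4 dvd m) = (4 dvd m')"
    using r unfolding a1 a2 a3 a4 by (auto split: if_splits)
  then show ?thesis by presburger
qed

lemma target4:
  assumes t: "t \<in> Dinv 4" and t': "t' \<in> Dinv 4" and I: "Nm t' - Nm t \<in> \<int>"
  shows "t' - t \<in> OK 4 \<or> t' - \<i> * t \<in> OK 4"
proof -
  have memb: "dv 4 a b \<in> OK 4" if ad: "2 dvd a" "2 dvd b" for a b
  proof -
    obtain a1 where a1: "a = 2 * a1" using ad by blast
    obtain b1 where b1: "b = 2 * b1" using ad by blast
    show ?thesis
      by (rule ok_dv_OK[of 4 10 a "5*b1 - a" "b - a1" b]) (simp_all add: a1 b1 algebra_simps)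
  qed
  obtain m n where tm: "t = dv 4 m n" using t by (auto simp: Dinv_iff)
  obtain m' n' where tm': "t' = dv 4 m' n'" using t' by (auto simp: Dinv_iff)
  have dq: "int 4 dvd QQ 4 5 m' n' - QQ 4 5 m n"
    using coords_diff[of 4 5 m' n' m n] I unfolding tm tm' by simp
  have eq: "(m'^2 + n'^2) - (m^2 + n^2) = (QQ 4 5 m' n' - QQ 4 5 m n) - 4 * (- (m'*n') + m*n + n'^2 - n^2)"
    by (simp add: QQ_def algebra_simps power2_eq_square)
  have "4 dvd (m'^2 + n'^2) - (m^2 + n^2)"
    unfolding eq by (rule dvd_diff) (use dq in simp_all)
  then have "(2 dvd m' - m \<and> 2 dvd n' - n) \<or> (2 dvd m' - (2*m - 5*n) \<and> 2 dvd n' - (m - 2*n))"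
    by (rule par4[OF sq8[of m] sq8[of n] sq8[of m'] sq8[of n']])
  then show ?thesis
    unfolding tm tm' i_dv4 dv_diff using memb by blast
qed

lemma target8:
  assumes t: "t \<in> Dinv 8" and t': "t' \<in> Dinv 8" and I: "Nm t' - Nm t \<in> \<int>"
  shows "t' - t \<in> OK 8 \<or> t' - (- t) \<in> OK 8"
proof -
  have memb: "dv 8 a b \<in> OK 8" if ad: "4 dvd a" "2 dvd b" for a b
  proof -
    obtain a1 where a1: "a = 4 * a1" using ad by blast
    obtain b1 where b1: "b = 2 * b1" using ad by blast
    show ?thesis
      by (rule ok_dv_OK[of 8 36 a "9*b1 - a" "b - a1" b]) (simp_all add: a1 b1 algebra_simps)
  qed
  obtain m n where tm: "t = dv 8 m n" using t by (auto simp: Dinv_iff)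
  obtain m' n' where tm': "t' = dv 8 m' n'" using t' by (auto simp: Dinv_iff)
  have dq: "int 8 dvd QQ 8 18 m' n' - QQ 8 18 m n"
    using coords_diff[of 8 18 m' n' m n] I unfolding tm tm' by simp
  have eq: "(m'^2 + 2*n'^2) - (m^2 + 2*n^2) = (QQ 8 18 m' n' - QQ 8 18 m n) - 8 * (- (m'*n') + m*n + 2*n'^2 - 2*n^2)"
    by (simp add: QQ_def algebra_simps power2_eq_square)
  have "8 dvd (m'^2 + 2*n'^2) - (m^2 + 2*n^2)"
    unfolding eq by (rule dvd_diff) (use dq in simp_all)
  then have "(4 dvd m' - m \<and> 2 dvd n' - n) \<or> (4 dvd m' + m \<and> 2 dvd n' + n)"
    by (rule par8[OF sq8[of m] sq8[of n] sq8[of m'] sq8[of n']])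
  then show ?thesis
    unfolding tm tm' dv_diff dv_sum using memb by blast
qed

lemma zero_OK: "0 \<in> OK D"
proof -
  have "(0::complex) = ok D 0 0" by (simp add: ok_def)
  then show ?thesis by (auto simp: OK_iff)
qed

lemma m1_unit: "-1 \<in> unitsK D"
proof -
  have "(-1::complex) = ok D (-1) 0" by (simp add: ok_def)
  then have "(-1::complex) \<in> OK D" by (auto simp: OK_iff)
  then show ?thesis unfolding unitsK_def by (auto intro!: bexI[of _ "-1"])
qed

lemma mi_unit: "- \<i> \<in> unitsK 4"
proof -
  have "- \<i> = ok 4 (-2) (-1)" by (simp add: ok_def omegaK_def sqrtmD_def complex_eq_iff)
  then have a: "- \<i> \<in> OK 4" by (auto simp: OK_iff)
  have "\<i> = ok 4 2 1" by (simp add: ok_def omegaK_def sqrtmD_def complex_eq_iff)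
  then have b: "\<i> \<in> OK 4" by (auto simp: OK_iff)
  show ?thesis unfolding unitsK_def using a b by (auto intro!: bexI[of _ "\<i>"])
qed

lemma main_dir:
  assumes Dset: "D \<in> {3, 4, 7, 8, 11, 19, 43, 67, 163}"
    and cond: "D = 4 \<or> D = 8 \<or> (prime D \<and> D mod 4 = 3)"
    and H: "HJac D k N \<phi>"
  shows "HJac_spez D k N \<phi>"
proof -
  have D: "D > 0" using Dset by auto
  have D4: "4 dvd D*(D+1)" using Dset by auto
  have h2: "\<forall>\<epsilon> \<in> unitsK D. \<forall>a b c d :: int. a * d - b * c = 1 \<and> int N dvd c \<longrightarrow>
        (\<forall>\<tau> z w. Im \<tau> > 0 \<longrightarrow>
          inverse ((of_int c * \<tau> + of_int d) ^ k)
          * eC (- (of_int c * z * w) / (of_int c * \<tau> + of_int d))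
          * \<phi> ((of_int a * \<tau> + of_int b) / (of_int c * \<tau> + of_int d))
              (\<epsilon> * z / (of_int c * \<tau> + of_int d)) (cnj \<epsilon> * w / (of_int c * \<tau> + of_int d))
          = \<phi> \<tau> z w)"
    and h3: "\<forall>lam \<in> OK D. \<forall>\<mu> \<in> OK D. \<forall>\<tau> z w. Im \<tau> > 0 \<longrightarrow>
        eC (of_real (Nm lam) * \<tau> + cnj lam * z + lam * w)
        * \<phi> \<tau> (z + lam * \<tau> + \<mu>) (w + cnj lam * \<tau> + cnj \<mu>) = \<phi> \<tau> z w"
    and h4: "\<forall>a b c d :: int. a * d - b * c = 1 \<longrightarrow>
        (\<exists>\<nu> > 0. (a = 1 \<and> b = 0 \<and> c = 0 \<and> d = 1 \<longrightarrow> \<nu> = 1) \<and>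
           (\<exists>cf. fourier_exp D (slash k \<phi> a b c d) \<nu> cf))"
    using H unfolding HJac_def by blast+
  have slash1: "slash k \<phi> 1 0 0 1 = \<phi>"
    by (intro ext) (simp add: slash_def eC_def)
  have ex: "\<exists>\<nu> > 0. (True \<longrightarrow> \<nu> = 1) \<and> (\<exists>cf. fourier_exp D (slash k \<phi> 1 0 0 1) \<nu> cf)"
    using spec[OF spec[OF spec[OF spec[OF h4, of 1], of 0], of 0], of 1] by simp
  obtain cf0 where FE0: "fourier_exp D \<phi> 1 cf0"
    using ex slash1 by auto
  define cf where "cf p = cf0 (fst p) (snd p)" for p :: "nat \<times> complex"
  have FE: "((\<lambda>p. cf p * EE p \<tau> z w) has_sum \<phi> \<tau> z w) (SS D)" if "Im \<tau> > 0" for \<tau> z w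
  proof -
    have "((\<lambda>(l, t). cf0 l t * eC (of_nat l / of_nat 1 * \<tau> + cnj t * z + t * w)) has_sum \<phi> \<tau> z w)
       {(l, t). t \<in> Dinv D \<and> real 1 * Nm t \<le> real l}"
      using FE0 that unfolding fourier_exp_def by blast
    moreover have "{(l, t). t \<in> Dinv D \<and> real 1 * Nm t \<le> real l} = SS D"
      by (auto simp: SS_def)
    moreover have "(\<lambda>(l, t). cf0 l t * eC (of_nat l / of_nat 1 * \<tau> + cnj t * z + t * w)) = (\<lambda>p. cf p * EE p \<tau> z w)"
      by (auto simp: cf_def EE_def)
    ultimately show ?thesis by simp
  qed
  have UE: "\<phi> \<tau> (\<epsilon> * z) (cnj \<epsilon> * w) = \<phi> \<tau> z w" if "\<epsilon> \<in> unitsK D" "Im \<tau> > 0" for \<epsilon> \<tau> z w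
  proof -
    have "\<forall>\<tau> z w. Im \<tau> > 0 \<longrightarrow> \<phi> \<tau> (\<epsilon> * z) (cnj \<epsilon> * w) = \<phi> \<tau> z w"
      using spec[OF spec[OF spec[OF spec[OF bspec[OF h2 that(1)], of 1], of 0], of 0], of 1]
      by (simp add: eC_def)
    then show ?thesis using that(2) by blast
  qed
  have TR: "eC (of_real (Nm x) * \<tau> + cnj x * z + x * w) * \<phi> \<tau> (z + x * \<tau>) (w + cnj x * \<tau>) = \<phi> \<tau> z w"
    if "x \<in> OK D" "Im \<tau> > 0" for x \<tau> z w
  proof -
    have "\<forall>\<tau> z w. Im \<tau> > 0 \<longrightarrow> eC (of_real (Nm x) * \<tau> + cnj x * z + x * w) * \<phi> \<tau> (z + x * \<tau>) (w + cnj x * \<tau>) = \<phi> \<tau> z w"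
      using bspec[OF bspec[OF h3 that(1)] zero_OK] by simp
    then show ?thesis using that(2) by blast
  qed
  have U1: "cf (fst p, - snd p) = cf p" if "p \<in> SS D" for p
  proof -
    have "cf (fst p, cnj (-1) * snd p) = cf p"
      by (rule unit_rel[where \<epsilon>="-1", OF D FE]) (use UE[OF m1_unit] Dinv_minus that in auto)
    then show ?thesis by simp
  qed
  have U4: "cf (fst p, \<i> * snd p) = cf p" if "p \<in> SS D" "D = 4" for p
  proof -
    have MEM: "\<i> * t \<in> Dinv D \<and> - \<i> * t \<in> Dinv D" if "t \<in> Dinv D" for t
    proof -
      obtain m n where "t = dv 4 m n" using \<open>t \<in> Dinv D\<close> \<open>D = 4\<close> by (auto simp: Dinv_iff)
      then have "\<i> * t = dv 4 (2*m - 5*n) (m - 2*n)" by (simp add: i_dv4)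
      then have "\<i> * t \<in> Dinv 4" unfolding Dinv_iff by blast
      then show ?thesis using \<open>D = 4\<close> Dinv_minus[of "\<i> * t" 4] by simp
    qed
    have "cf (fst p, cnj (-\<i>) * snd p) = cf p"
      by (rule unit_rel[where \<epsilon>="-\<i>", OF D FE]) (use UE[OF mi_unit[folded \<open>D = 4\<close>]] MEM \<open>p \<in> SS D\<close> in auto)
    then show ?thesis by simp
  qed
  have TRr: "cf (nat \<lfloor>real (fst p) + (Nm (snd p + x) - Nm (snd p))\<rfloor>, snd p + x) = cf p"
    if "x \<in> OK D" "p \<in> SS D" for x p
    by (rule trans_rel[OF D D4 FE TR[OF that(1)] that])
  show ?thesis
    unfolding HJac_spez_def
  proof (intro conjI exI[of _ cf0] allI impI)
    show "HJac D k N \<phi>" by (rule H)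
    show "fourier_exp D \<phi> 1 cf0" by (rule FE0)
    fix l t l' t'
    assume a: "t \<in> Dinv D \<and> Nm t \<le> real l \<and> t' \<in> Dinv D \<and> Nm t' \<le> real l' \<and> real l - Nm t = real l' - Nm t'"
    then have t: "t \<in> Dinv D" and lt: "Nm t \<le> real l" and t': "t' \<in> Dinv D" and e: "real l - Nm t = real l' - Nm t'"
      by auto
    have pS: "(l, t) \<in> SS D" using t lt by (simp add: SS_def)
    have I: "Nm t' - Nm t \<in> \<int>"
    proof -
      have "Nm t' - Nm t = of_int (int l' - int l)" using e by simp
      then show ?thesis by simp
    qed
    obtain u where u: "u \<in> Dinv D" "Nm u = Nm t" "cf (l, u) = cf (l, t)" "t' - u \<in> OK D"
    proof -
      consider "D = 4" | "D = 8" | "prime D" "D mod 4 = 3" using cond by blast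
      then show ?thesis
      proof cases
        case 1
        then have "t' - t \<in> OK D \<or> t' - \<i> * t \<in> OK D" using target4 t t' I by simp
        moreover have "\<i> * t \<in> Dinv D"
        proof -
          obtain m n where "t = dv 4 m n" using t 1 by (auto simp: Dinv_iff)
          then have "\<i> * t = dv 4 (2*m - 5*n) (m - 2*n)" by (simp add: i_dv4)
          then show ?thesis unfolding 1 Dinv_iff by blast
        qed
        ultimately show ?thesis using that[of t] that[of "\<i> * t"] t U4[OF pS 1] by (auto simp: Nm_i)
      next
        case 2
        then have "t' - t \<in> OK D \<or> t' - (- t) \<in> OK D" using target8 t t' I by simp
        then show ?thesis using that[of t] that[of "- t"] t U1[OF pS] Dinv_minus[OF t] by (auto simp: Nm_minus)
      next
        case 3
        then have "t' - t \<in> OK D \<or> t' - (- t) \<in> OK D" using target_odd t t' I by blast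
        then show ?thesis using that[of t] that[of "- t"] t U1[OF pS] Dinv_minus[OF t] by (auto simp: Nm_minus)
      qed
    qed
    have uS: "(l, u) \<in> SS D" using u lt by (simp add: SS_def)
    have "cf (nat \<lfloor>real l + (Nm (u + (t' - u)) - Nm u)\<rfloor>, u + (t' - u)) = cf (l, u)"
      using TRr[OF u(4) uS] by simp
    moreover have "nat \<lfloor>real l + (Nm (u + (t' - u)) - Nm u)\<rfloor> = l'"
    proof -
      have "real l + (Nm (u + (t' - u)) - Nm u) = real l'" using e u(2) by simp
      then show ?thesis by simp
    qed
    ultimately have "cf (l', t') = cf (l, t)" using u(3) by simp
    then show "cf0 l t = cf0 l' t'" by (simp add: cf_def)
  qed
qed

theorem proposition2p7:
  fixes D k N :: nat
  assumes "D \<in> {3, 4, 7, 8, 11, 19, 43, 67, 163}"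
    and "N \<ge> 1" and "k > 0"
    and "card (unitsK D) dvd k"
    and "D = 4 \<or> D = 8 \<or> (prime D \<and> D mod 4 = 3)"
  shows "{\<phi>. HJac_spez D k N \<phi>} = {\<phi>. HJac D k N \<phi>}"
proof (rule Collect_cong)
  fix \<phi>
  show "HJac_spez D k N \<phi> \<longleftrightarrow> HJac D k N \<phi>"
    using main_dir[OF assms(1) assms(5)] by (auto simp: HJac_spez_def)
qed

end
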